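(* Let $s,t,r$ be nonnegative integers with $s>t$. Then \[ \sum_{D \in \mathcal{D}_{s,t}^{(r)}} q^{\mathrm{vmr}(D)} = q^{\binom{r+1}{2}}\begin{bmatrix}s+t\\ s+r\end{bmatrix}_q. \]
   Context: A ballot path from $(0,0)$ to $(s+t,s-t)$ is a sequence of lattice points $v_0=(0,0),v_1,\ldots,v_{s+t}=(s+t,s-t)$ with each step $v_i-v_{i-1}\in\{(1,1),(1,-1)\}$ that never goes below the $x$-axis. A point $v_i$ ($0<i<s+t$) is a valley if $v_i-v_{i-1}=(1,-1)$ and $v_{i+1}-v_i=(1,1)$; a valley lying on the $x$-axis is a return. Each return may independently be marked or not; a marked ballot path is a ballot path together with a choice of which of its returns are marked. $\mathcal{D}_{s,t}^{(r)}$ is the set of marked ballot paths from $(0,0)$ to $(s+t,s-t)$ with at least $r$ marked returns. For such $D$, $\mathrm{maj}(D)$ is the sum of the $x$-coordinates of all valleys of $D$, and $\mathrm{vmr}(D)=\mathrm{maj}(D)-\frac12\sum x_i$, where the last sum runs over the $x$-coordinates $x_i$ of the marked returns of $D$. Notation: $(a;q)_n=(1-a)\cdots(1-aq^{n-1})$ and $\begin{bmatrix}n\\k\end{bmatrix}_q=\frac{(q;q)_n}{(q;q)_k(q;q)_{n-k}}$ for $n\ge k\ge0$, $0$ otherwise. *)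

theory Defs
  imports Complex_Main
begin

text \<open>A lattice path of up/down steps is a list of booleans: True = step (1,1),
  False = step (1,-1).  Step number i (1-based) is xs ! (i-1).
  The point v_i has x-coordinate i and y-coordinate path_height xs i.\<close>

definition path_height :: "bool list \<Rightarrow> nat \<Rightarrow> int" where
  "path_height xs i = int (length (filter id (take i xs))) - int (length (filter Not (take i xs)))"

definition ballot_path :: "nat \<Rightarrow> nat \<Rightarrow> bool list \<Rightarrow> bool" where
  "ballot_path s t xs \<longleftrightarrow> length xs = s + t \<and> path_height xs (s + t) = int s - int t
     \<and> (\<forall>i \<le> length xs. 0 \<le> path_height xs i)"

definition valleys :: "bool list \<Rightarrow> nat set" where
  "valleys xs = {i. 0 < i \<and> i < length xs \<and> \<not> xs ! (i - 1) \<and> xs ! i}"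

definition returns :: "bool list \<Rightarrow> nat set" where
  "returns xs = {i \<in> valleys xs. path_height xs i = 0}"

text \<open>Marked ballot paths: a path together with the set of x-coordinates of its marked returns;
  D_{s,t}^{(r)} requires at least r marked returns.\<close>
definition marked_paths :: "nat \<Rightarrow> nat \<Rightarrow> nat \<Rightarrow> (bool list \<times> nat set) set" where
  "marked_paths s t r = {(xs, M). ballot_path s t xs \<and> M \<subseteq> returns xs \<and> r \<le> card M}"

definition maj :: "bool list \<Rightarrow> nat" where
  "maj xs = (\<Sum>i\<in>valleys xs. i)"

text \<open>vmr(D) = maj(D) - 1/2 * sum of x-coordinates of marked returns.  Returns lie on the
  x-axis and hence have even x-coordinate, so x div 2 = x/2 exactly.\<close>
definition vmr :: "bool list \<times> nat set \<Rightarrow> int" where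
  "vmr D = int (maj (fst D)) - int (\<Sum>x\<in>snd D. x div 2)"

definition qpoch :: "'a::comm_ring_1 \<Rightarrow> 'a \<Rightarrow> nat \<Rightarrow> 'a" where
  "qpoch a q n = (\<Prod>i<n. 1 - a * q ^ i)"

definition qbinom :: "'a::field \<Rightarrow> nat \<Rightarrow> nat \<Rightarrow> 'a" where
  "qbinom q n k = (if k \<le> n then qpoch q q n / (qpoch q q k * qpoch q q (n - k)) else 0)"

end

theory Submission
  imports Defs
begin


lemma absP1:
  fixes A B D a b :: complex
  assumes "B \<noteq> 0" "D \<noteq> 0" "1 - a \<noteq> 0" "1 - b \<noteq> 0"
  shows "A * (1 - a * b) / (B * (1 - a) * (D * (1 - b))) = A / (B * (D * (1 - b))) + a * (A / (B * (1 - a) * D))"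
  proof -
  define u v where "u = 1 - a" and "v = 1 - b"
  have a: "a = 1 - u" and b: "b = 1 - v" using u_def v_def by simp_all
  have "u \<noteq> 0" "v \<noteq> 0" using assms u_def v_def by auto
  then show ?thesis unfolding a b using assms(1,2) by (simp add: field_simps)
qed

lemma absP2:
  fixes A B D a b :: complex
  assumes "B \<noteq> 0" "D \<noteq> 0" "1 - a \<noteq> 0" "1 - b \<noteq> 0"
  shows "A * (1 - a * b) / (B * (1 - a) * (D * (1 - b))) = b * (A / (B * (D * (1 - b)))) + (A / (B * (1 - a) * D))"
  proof -
  define u v where "u = 1 - a" and "v = 1 - b"
  have a: "a = 1 - u" and b: "b = 1 - v" using u_def v_def by simp_all
  have "u \<noteq> 0" "v \<noteq> 0" using assms u_def v_def by auto
  then show ?thesis unfolding a b using assms(1,2) by (simp add: field_simps)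
qed

lemma qpoch_Suc: "qpoch q q (Suc n) = qpoch q q n * (1 - q ^ Suc n)"
  by (simp add: qpoch_def)

lemma qpoch_0[simp]: "qpoch q q 0 = 1" by (simp add: qpoch_def)

lemma qpoch_nz:
  fixes q :: complex
  assumes "\<forall>n>0. q ^ n \<noteq> 1"
  shows "qpoch q q n \<noteq> 0"
  using assms by (induction n) (auto simp: qpoch_Suc)

lemma qbinom_gt: "n < k \<Longrightarrow> qbinom q n k = 0" by (simp add: qbinom_def)

lemma qbinom_eq: "qbinom q (k + d) k = qpoch q q (k + d) / (qpoch q q k * qpoch q q d)"
  by (simp add: qbinom_def)

lemma qbinom_nn: 
  fixes q :: complex
  assumes "\<forall>n>0. q ^ n \<noteq> 1"
  shows "qbinom q n n = 1"
  using qpoch_nz[OF assms] by (simp add: qbinom_def)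

lemma qbinom_sym:
  "k \<le> n \<Longrightarrow> qbinom q n (n - k) = qbinom q n k"
  by (simp add: qbinom_def mult.commute)

lemma qP1:
  fixes q :: complex
  assumes h: "\<forall>n>0. q ^ n \<noteq> 1"
  shows "qbinom q (Suc n) (Suc k) = qbinom q n k + q ^ Suc k * qbinom q n (Suc k)"
proof (cases "k < n")
  case True
  then obtain d where n: "n = k + Suc d" by (metis add_Suc_right less_imp_Suc_add)
  have e1: "qbinom q (Suc n) (Suc k) = qpoch q q (Suc n) / (qpoch q q (Suc k) * qpoch q q (Suc d))"
    using qbinom_eq[of q "Suc k" "Suc d"] n by simp
  have e2: "qbinom q n k = qpoch q q n / (qpoch q q k * qpoch q q (Suc d))"
    using qbinom_eq[of q k "Suc d"] n by simp
  have e3: "qbinom q n (Suc k) = qpoch q q n / (qpoch q q (Suc k) * qpoch q q d)"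
    using qbinom_eq[of q "Suc k" d] n by simp
  have nz: "\<And>m. qpoch q q m \<noteq> 0" using qpoch_nz[OF h] .
  have nz1: "1 - q ^ Suc k \<noteq> 0" "1 - q ^ Suc d \<noteq> 0" using h by auto
  have pw: "q ^ Suc n = q ^ Suc k * q ^ Suc d" using n by (simp add: power_add[symmetric])
  show ?thesis unfolding e1 e2 e3 qpoch_Suc pw
    using absP1[OF nz nz nz1] by simp
next
  case False
  then show ?thesis
  proof (cases "k = n")
    case True
    then show ?thesis using qbinom_nn[OF h] by (simp add: qbinom_gt)
  qed (simp add: qbinom_gt)
qed

lemma qP2:
  fixes q :: complex
  assumes h: "\<forall>n>0. q ^ n \<noteq> 1" and "k \<le> n"
  shows "qbinom q (Suc n) (Suc k) = q ^ (n - k) * qbinom q n k + qbinom q n (Suc k)"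
proof (cases "k < n")
  case True
  then obtain d where n: "n = k + Suc d" by (metis add_Suc_right less_imp_Suc_add)
  have e1: "qbinom q (Suc n) (Suc k) = qpoch q q (Suc n) / (qpoch q q (Suc k) * qpoch q q (Suc d))"
    using qbinom_eq[of q "Suc k" "Suc d"] n by simp
  have e2: "qbinom q n k = qpoch q q n / (qpoch q q k * qpoch q q (Suc d))"
    using qbinom_eq[of q k "Suc d"] n by simp
  have e3: "qbinom q n (Suc k) = qpoch q q n / (qpoch q q (Suc k) * qpoch q q d)"
    using qbinom_eq[of q "Suc k" d] n by simp
  have nz: "\<And>m. qpoch q q m \<noteq> 0" using qpoch_nz[OF h] .
  have nz1: "1 - q ^ Suc k \<noteq> 0" "1 - q ^ Suc d \<noteq> 0" using h by auto
  have pw: "q ^ Suc n = q ^ Suc k * q ^ Suc d" using n by (simp add: power_add[symmetric])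
  have nk: "n - k = Suc d" using n by simp
  show ?thesis unfolding e1 e2 e3 qpoch_Suc nk pw
    using absP2[OF nz nz nz1] by simp
next
  case False
  then have "k = n" using assms by simp
  then show ?thesis using qbinom_nn[OF h] by (simp add: qbinom_gt)
qed

lemma qP3:
  fixes q :: complex
  assumes h: "\<forall>n>0. q ^ n \<noteq> 1"
  shows "(1 - q ^ Suc k) * qbinom q (Suc n) (Suc k) = (1 - q ^ Suc n) * qbinom q n k"
proof (cases "k \<le> n")
  case True
  then obtain d where n: "n = k + d" using le_Suc_ex by blast
  have e1: "qbinom q (Suc n) (Suc k) = qpoch q q (Suc n) / (qpoch q q (Suc k) * qpoch q q d)"
    using qbinom_eq[of q "Suc k" d] n by simp
  have e2: "qbinom q n k = qpoch q q n / (qpoch q q k * qpoch q q d)"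
    using qbinom_eq[of q k d] n by simp
  have nz: "\<And>m. qpoch q q m \<noteq> 0" using qpoch_nz[OF h] .
  have nz1: "1 - q ^ Suc k \<noteq> 0" using h by auto
  show ?thesis unfolding e1 e2 qpoch_Suc using nz nz1 by (simp add: field_simps)
qed (simp add: qbinom_gt)

definition Cf :: "complex \<Rightarrow> nat \<Rightarrow> nat \<Rightarrow> nat \<Rightarrow> complex" where
  "Cf q s t r = q ^ ((r + 1) choose 2) * qbinom q (s + t) (s + r)"

lemma recA:
  fixes q :: complex
  assumes h: "\<forall>n>0. q ^ n \<noteq> 1"
  shows "Cf q (Suc s) (Suc t) r = Cf q s (Suc t) r + Cf q (Suc s) t r - (1 - q ^ (s + Suc t)) * Cf q s t r"
proof -
  have 1: "qbinom q (Suc (Suc (s+t))) (Suc (s+r)) = qbinom q (Suc (s+t)) (s+r) + q ^ Suc (s+r) * qbinom q (Suc (s+t)) (Suc (s+r))"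
    using qP1[OF h] .
  have 3: "(1 - q ^ Suc (s+r)) * qbinom q (Suc (s+t)) (Suc (s+r)) = (1 - q ^ Suc (s+t)) * qbinom q (s+t) (s+r)"
    using qP3[OF h] .
  have "qbinom q (Suc (Suc (s+t))) (Suc (s+r)) = qbinom q (Suc (s+t)) (s+r) + qbinom q (Suc (s+t)) (Suc (s+r)) - (1 - q ^ Suc (s+t)) * qbinom q (s+t) (s+r)"
    unfolding 1 3[symmetric] by (simp add: algebra_simps)
  from arg_cong[OF this, of "(*) (q ^ ((r + 1) choose 2))"]
  show ?thesis unfolding Cf_def by (simp add: algebra_simps)
qed

lemma recB:
  fixes q :: complex
  assumes h: "\<forall>n>0. q ^ n \<noteq> 1"
  shows "Cf q (Suc (Suc u)) (Suc u) r = q ^ (2 * Suc u) * Cf q (Suc u) u r + q ^ Suc u * Cf q (Suc u) u (r - 1) + Cf q (Suc (Suc u)) u r"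
proof (cases "Suc u < r")
  case True
  then show ?thesis unfolding Cf_def by (simp add: qbinom_gt)
next
  case False
  define k where "k = Suc u + r"
  have P2: "qbinom q (Suc (Suc (Suc (2*u)))) (Suc k) = q ^ (Suc u - r) * qbinom q (Suc (Suc (2*u))) k + qbinom q (Suc (Suc (2*u))) (Suc k)"
    using qP2[OF h, of k "Suc (Suc (2*u))"] False unfolding k_def by simp
  have P1: "qbinom q (Suc (Suc (2*u))) k = qbinom q (Suc (2*u)) (u + r) + q ^ (Suc (u+r)) * qbinom q (Suc (2*u)) (Suc (u + r))"
    using qP1[OF h, of "Suc (2*u)" "u+r"] unfolding k_def by simp
  have main: "qbinom q (Suc (Suc (Suc (2*u)))) (Suc k) = q ^ (Suc u - r) * qbinom q (Suc (2*u)) (u + r) + q ^ (2 * Suc u) * qbinom q (Suc (2*u)) (Suc (u + r)) + qbinom q (Suc (Suc (2*u))) (Suc k)"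
  proof -
    have "q ^ (Suc u - r) * q ^ (Suc (u+r)) = q ^ (2 * Suc u)"
      using False by (simp add: power_add[symmetric] mult_2)
    then show ?thesis unfolding P2 P1 by (simp add: algebra_simps, blast)
  qed
  have a1: "Suc (Suc u) + Suc u = Suc (Suc (Suc (2*u)))" "Suc (Suc u) + r = Suc k"
    "Suc u + u = Suc (2*u)" "Suc u + r = Suc (u + r)" "Suc (Suc u) + u = Suc (Suc (2*u))"
    by (simp_all add: k_def)
  have L: "Cf q (Suc (Suc u)) (Suc u) r = q ^ ((r+1) choose 2) * (q ^ (Suc u - r) * qbinom q (Suc (2*u)) (u + r) + q ^ (2 * Suc u) * qbinom q (Suc (2*u)) (Suc (u + r)) + qbinom q (Suc (Suc (2*u))) (Suc k))"
    unfolding Cf_def a1 main ..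
  have R1: "Cf q (Suc u) u r = q ^ ((r+1) choose 2) * qbinom q (Suc (2*u)) (Suc (u + r))"
    unfolding Cf_def a1 ..
  have R3: "Cf q (Suc (Suc u)) u r = q ^ ((r+1) choose 2) * qbinom q (Suc (Suc (2*u))) (Suc k)"
    unfolding Cf_def a1 ..
  have helper: "\<And>a x y z w B0 B1 B2 :: complex. a * x = z * w \<Longrightarrow>
     a * (x * B0 + y * B1 + B2) = y * (a * B1) + z * (w * B0) + a * B2"
    by (metis (no_types, lifting) add.commute distrib_left mult.assoc mult.left_commute)
  show ?thesis
  proof (cases r)
    case 0
    have sym: "qbinom q (Suc (2*u)) u = qbinom q (Suc (2*u)) (Suc u)"
      using qbinom_sym[of "Suc u" "Suc (2*u)" q] by simp
    have R2: "Cf q (Suc u) u (r - 1) = 1 * qbinom q (Suc (2*u)) (u + r)"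
      unfolding Cf_def 0 using sym by (simp add: numeral_2_eq_2)
    show ?thesis unfolding L R1 R2 R3 by (rule helper) (simp add: 0 numeral_2_eq_2)
  next
    case (Suc r')
    have ch: "(Suc r + 1) choose 2 = ((r + 1) choose 2) + Suc r" for r :: nat
      by (simp add: numeral_2_eq_2)
    have R2: "Cf q (Suc u) u (r - 1) = q ^ ((r' + 1) choose 2) * qbinom q (Suc (2*u)) (u + r)"
      unfolding Cf_def Suc by (simp add: mult_2)
    have pw: "q ^ ((Suc r' + 1) choose 2) * q ^ (Suc u - Suc r') = q ^ Suc u * q ^ ((r' + 1) choose 2)"
      using False Suc unfolding ch by (simp add: power_add[symmetric] add.commute)
    show ?thesis unfolding L R1 R2 R3 by (rule helper) (use pw Suc in simp)
  qed
qed

lemma recT0: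
  fixes q :: complex
  assumes h: "\<forall>n>0. q ^ n \<noteq> 1"
  shows "Cf q s 0 r = (if r = 0 then 1 else 0)"
  unfolding Cf_def using qbinom_nn[OF h] by (simp add: qbinom_gt numeral_2_eq_2)



definition BP :: "nat \<Rightarrow> nat \<Rightarrow> bool list set" where
  "BP s t = {xs. ballot_path s t xs}"

definition nv :: "bool list \<Rightarrow> bool" where
  "nv xs \<longleftrightarrow> 0 < length xs \<and> \<not> xs ! (length xs - 1)"

lemma finite_BP: "finite (BP s t)"
proof -
  have "BP s t \<subseteq> {xs. set xs \<subseteq> UNIV \<and> length xs = s + t}"
    by (auto simp: BP_def ballot_path_def)
  moreover have "finite {xs. set xs \<subseteq> (UNIV::bool set) \<and> length xs = s + t}"
    by (rule finite_lists_length_eq) simp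
  ultimately show ?thesis by (rule finite_subset)
qed

lemma ph_append: "i \<le> length xs \<Longrightarrow> path_height (xs @ ys) i = path_height xs i"
  by (simp add: path_height_def)

lemma ph_full: "path_height xs (length xs) = int (length (filter id xs)) - int (length (filter Not xs))"
  by (simp add: path_height_def)

lemma ph_snoc: "path_height (xs @ [b]) (Suc (length xs)) = path_height xs (length xs) + (if b then 1 else -1)"
  by (simp add: path_height_def)

lemma ballot_counts:
  assumes "ballot_path s t xs"
  shows "length (filter id xs) = s" "length (filter Not xs) = t"
proof -
  have l: "length xs = s + t" and h: "path_height xs (s+t) = int s - int t"
    using assms by (auto simp: ballot_path_def)
  have c: "length (filter id xs) + length (filter Not xs) = length xs"
    using sum_length_filter_compl[of id xs] by (simp add: comp_def)
  from h l have "int (length (filter id xs)) - int (length (filter Not xs)) = int s - int t"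
    using ph_full[of xs] by simp
  with c l show "length (filter id xs) = s" "length (filter Not xs) = t" by linarith+
qed

lemma ballot_T: "ballot_path (Suc s) t (xs @ [True]) \<longleftrightarrow> ballot_path s t xs"
proof
  assume a: "ballot_path (Suc s) t (xs @ [True])"
  then have l: "length xs = s + t" by (simp add: ballot_path_def)
  have e: "path_height (xs @ [True]) (Suc (length xs)) = int (Suc s) - int t"
    using a l by (simp add: ballot_path_def)
  have nn: "\<forall>i\<le>length xs. 0 \<le> path_height xs i"
    using a by (auto simp: ballot_path_def ph_append[symmetric, of _ xs "[True]"])
  show "ballot_path s t xs"
    using e nn l unfolding ballot_path_def ph_snoc by simp
next
  assume a: "ballot_path s t xs"
  then have l: "length xs = s + t" and h: "path_height xs (length xs) = int s - int t"
     and nn: "\<forall>i\<le>length xs. 0 \<le> path_height xs i" by (auto simp: ballot_path_def)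
  have "\<forall>i\<le>length (xs @ [True]). 0 \<le> path_height (xs @ [True]) i"
  proof (intro allI impI)
    fix i assume "i \<le> length (xs @ [True])"
    then consider "i \<le> length xs" | "i = Suc (length xs)" by fastforce
    then show "0 \<le> path_height (xs @ [True]) i"
    proof cases
      case 1 then show ?thesis using nn ph_append[OF 1] by simp
    next
      case 2 then show ?thesis using ph_snoc[of xs True] h nn[rule_format, of "length xs"] by (simp add: l)
    qed
  qed
  then show "ballot_path (Suc s) t (xs @ [True])"
    using l h ph_snoc[of xs True] unfolding ballot_path_def by simp
qed

lemma ballot_F: "ballot_path s (Suc t) (xs @ [False]) \<longleftrightarrow> ballot_path s t xs \<and> t < s"
proof
  assume a: "ballot_path s (Suc t) (xs @ [False])"
  then have l: "length xs = s + t" by (simp add: ballot_path_def)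
  have e: "path_height (xs @ [False]) (Suc (length xs)) = int s - int (Suc t)"
    using a l by (simp add: ballot_path_def)
  have e00: "\<forall>i\<le>length (xs @ [False]). 0 \<le> path_height (xs @ [False]) i"
    using a by (simp add: ballot_path_def)
  have e0: "0 \<le> path_height (xs @ [False]) (Suc (length xs))"
    using e00[rule_format, of "Suc (length xs)"] by simp
  have nn: "\<forall>i\<le>length xs. 0 \<le> path_height xs i"
    using a by (auto simp: ballot_path_def ph_append[symmetric, of _ xs "[False]"])
  show "ballot_path s t xs \<and> t < s"
    using e e0 nn l unfolding ballot_path_def ph_snoc by simp
next
  assume a: "ballot_path s t xs \<and> t < s"
  then have l: "length xs = s + t" and h: "path_height xs (length xs) = int s - int t"
     and nn: "\<forall>i\<le>length xs. 0 \<le> path_height xs i" and ts: "t < s" by (auto simp: ballot_path_def)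
  have "\<forall>i\<le>length (xs @ [False]). 0 \<le> path_height (xs @ [False]) i"
  proof (intro allI impI)
    fix i assume "i \<le> length (xs @ [False])"
    then consider "i \<le> length xs" | "i = Suc (length xs)" by fastforce
    then show "0 \<le> path_height (xs @ [False]) i"
    proof cases
      case 1 then show ?thesis using nn ph_append[OF 1] by simp
    next
      case 2 then show ?thesis using ph_snoc[of xs False] h ts by (simp add: l)
    qed
  qed
  then show "ballot_path s (Suc t) (xs @ [False])"
    using l h ph_snoc[of xs False] unfolding ballot_path_def by simp
qed

lemma ballot_T0: "\<not> ballot_path 0 t (xs @ [True])"
  using ballot_counts(1)[of 0 t "xs @ [True]"] by auto

lemma ballot_F0: "\<not> ballot_path s 0 (xs @ [False])"
  using ballot_counts(2)[of s 0 "xs @ [False]"] by auto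

lemma ballot_00: "ballot_path 0 0 xs \<longleftrightarrow> xs = []"
  by (auto simp: ballot_path_def path_height_def)

lemma sum_snoc:
  assumes "finite A" "[] \<notin> A"
  shows "sum f A = (\<Sum>xs\<in>{xs. xs @ [True] \<in> A}. f (xs @ [True])) + (\<Sum>xs\<in>{xs. xs @ [False] \<in> A}. f (xs @ [False]))"
proof -
  let ?T = "{xs. xs @ [True] \<in> A}" and ?F = "{xs. xs @ [False] \<in> A}"
  have A: "A = (\<lambda>xs. xs @ [True]) ` ?T \<union> (\<lambda>xs. xs @ [False]) ` ?F"
  proof (rule set_eqI, rule iffI)
    fix zs assume z: "zs \<in> A"
    then have "zs \<noteq> []" using assms by auto
    then have zz: "zs = butlast zs @ [last zs]" by simp
    show "zs \<in> (\<lambda>xs. xs @ [True]) ` ?T \<union> (\<lambda>xs. xs @ [False]) ` ?F"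
    proof (cases "last zs")
      case True then show ?thesis using z zz by (metis (mono_tags, lifting) UnI1 image_eqI mem_Collect_eq)
    next
      case False then show ?thesis using z zz by (metis (mono_tags, lifting) UnI2 image_eqI mem_Collect_eq)
    qed
  qed auto
  have fT: "finite ((\<lambda>xs. xs @ [True]) ` ?T)" and fF: "finite ((\<lambda>xs. xs @ [False]) ` ?F)"
    by (rule finite_subset[OF _ assms(1)], auto)+
  have d: "(\<lambda>xs. xs @ [True]) ` ?T \<inter> (\<lambda>xs. xs @ [False]) ` ?F = {}" by auto
  have "sum f A = sum f ((\<lambda>xs. xs @ [True]) ` ?T) + sum f ((\<lambda>xs. xs @ [False]) ` ?F)"
    by (subst A, rule sum.union_disjoint[OF fT fF d])
  also have "\<dots> = (\<Sum>xs\<in>?T. f (xs @ [True])) + (\<Sum>xs\<in>?F. f (xs @ [False]))"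
    by (subst sum.reindex, simp add: inj_on_def, subst sum.reindex, simp add: inj_on_def, simp)
  finally show ?thesis .
qed



lemma valleys_sub: "valleys xs \<subseteq> {..<length xs}"
  by (auto simp: valleys_def)

lemma finite_valleys: "finite (valleys xs)"
  using valleys_sub finite_subset by blast

lemma returns_sub: "returns xs \<subseteq> valleys xs"
  by (auto simp: returns_def)

lemma finite_returns: "finite (returns xs)"
  using returns_sub finite_valleys finite_subset by blast

lemma valleys_F: "valleys (xs @ [False]) = valleys xs"
  by (auto simp: valleys_def nth_append)

lemma valleys_T: "valleys (xs @ [True]) = valleys xs \<union> (if nv xs then {length xs} else {})"
  by (auto simp: valleys_def nth_append nv_def less_Suc_eq)

lemma returns_F: "returns (xs @ [False]) = returns xs"
  using valleys_sub[of xs] by (auto simp: returns_def valleys_F ph_append)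

lemma returns_T: "returns (xs @ [True]) = returns xs \<union> (if nv xs \<and> path_height xs (length xs) = 0 then {length xs} else {})"
  using valleys_sub[of xs] by (auto simp: returns_def valleys_T ph_append split: if_splits)

lemma maj_F: "maj (xs @ [False]) = maj xs"
  by (simp add: maj_def valleys_F)

lemma maj_T: "maj (xs @ [True]) = maj xs + (if nv xs then length xs else 0)"
proof -
  have "length xs \<notin> valleys xs" using valleys_sub[of xs] by auto
  then show ?thesis by (simp add: maj_def valleys_T finite_valleys)
qed

definition ew :: "bool list \<Rightarrow> nat set \<Rightarrow> nat" where
  "ew xs M = maj xs - (\<Sum>x\<in>M. x div 2)"

lemma half_le_maj: "M \<subseteq> returns xs \<Longrightarrow> (\<Sum>x\<in>M. x div 2) \<le> maj xs"
proof -
  assume M: "M \<subseteq> returns xs"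
  then have f: "finite M" using finite_returns finite_subset by blast
  have "(\<Sum>x\<in>M. x div 2) \<le> (\<Sum>x\<in>M. x)" by (rule sum_mono) simp
  also have "\<dots> \<le> (\<Sum>x\<in>valleys xs. x)"
    using M returns_sub by (intro sum_mono2[OF finite_valleys]) auto
  finally show ?thesis by (simp add: maj_def)
qed

lemma vmr_ew: "M \<subseteq> returns xs \<Longrightarrow> vmr (xs, M) = int (ew xs M)"
  using half_le_maj[of M xs] by (simp add: vmr_def ew_def of_nat_diff)

definition MS :: "bool list \<Rightarrow> nat \<Rightarrow> nat set set" where
  "MS xs r = {M. M \<subseteq> returns xs \<and> r \<le> card M}"

lemma finite_MS: "finite (MS xs r)"
  unfolding MS_def by (rule finite_subset[of _ "Pow (returns xs)"]) (auto simp: finite_returns)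

definition g :: "complex \<Rightarrow> bool list \<Rightarrow> nat \<Rightarrow> complex" where
  "g q xs r = (\<Sum>M\<in>MS xs r. q ^ ew xs M)"

definition FF :: "complex \<Rightarrow> nat \<Rightarrow> nat \<Rightarrow> nat \<Rightarrow> complex" where
  "FF q s t r = (\<Sum>xs\<in>BP s t. g q xs r)"

lemma lhs_FF: "(\<Sum>D\<in>marked_paths s t r. q powi vmr D) = FF q s t r"
proof -
  have mp: "marked_paths s t r = Sigma (BP s t) (\<lambda>xs. MS xs r)"
    by (auto simp: marked_paths_def BP_def MS_def)
  have "(\<Sum>D\<in>marked_paths s t r. q powi vmr D) = (\<Sum>(xs, M)\<in>Sigma (BP s t) (\<lambda>xs. MS xs r). q ^ ew xs M)"
    unfolding mp by (intro sum.cong refl) (auto simp: vmr_ew MS_def)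
  also have "\<dots> = FF q s t r"
    unfolding FF_def g_def by (subst sum.Sigma[symmetric]) (auto simp: finite_BP finite_MS)
  finally show ?thesis .
qed

lemma g_F: "g q (xs @ [False]) r = g q xs r"
  by (simp add: g_def MS_def ew_def returns_F maj_F)

lemma g_T1: "\<not> nv xs \<Longrightarrow> g q (xs @ [True]) r = g q xs r"
  by (simp add: g_def MS_def ew_def returns_T maj_T)

lemma g_T2: 
  assumes "nv xs" "path_height xs (length xs) \<noteq> 0"
  shows "g q (xs @ [True]) r = q ^ length xs * g q xs r"
proof -
  have "g q (xs @ [True]) r = (\<Sum>M\<in>MS xs r. q ^ (ew xs M + length xs))"
    unfolding g_def using assms 
    by (intro sum.cong) (auto simp: MS_def ew_def returns_T maj_T half_le_maj)
  then show ?thesis by (simp add: g_def sum_distrib_left power_add mult.commute)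
qed

lemma g_T3:
  assumes "nv xs" "path_height xs (length xs) = 0"
  shows "g q (xs @ [True]) r = q ^ length xs * g q xs r + q ^ (length xs - length xs div 2) * g q xs (r - 1)"
proof -
  let ?n = "length xs"
  have nR: "?n \<notin> returns xs" using valleys_sub[of xs] returns_sub[of xs] by auto
  have R: "returns (xs @ [True]) = insert ?n (returns xs)" using assms by (simp add: returns_T)
  have S: "MS (xs @ [True]) r = MS xs r \<union> insert ?n ` MS xs (r - 1)"
  proof (rule set_eqI, rule iffI)
    fix M assume M: "M \<in> MS (xs @ [True]) r"
    then have Ms: "M \<subseteq> insert ?n (returns xs)" and c: "r \<le> card M" by (auto simp: MS_def R)
    have fM: "finite M" using Ms finite_returns finite_subset by blast
    show "M \<in> MS xs r \<union> insert ?n ` MS xs (r - 1)"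
    proof (cases "?n \<in> M")
      case True
      have "M - {?n} \<in> MS xs (r - 1)" using Ms c fM True by (auto simp: MS_def card_Diff_singleton)
      moreover have "M = insert ?n (M - {?n})" using True by auto
      ultimately show ?thesis by blast
    next
      case False
      then show ?thesis using Ms c by (auto simp: MS_def)
    qed
  next
    fix M assume "M \<in> MS xs r \<union> insert ?n ` MS xs (r - 1)"
    then show "M \<in> MS (xs @ [True]) r"
    proof
      assume "M \<in> MS xs r" then show ?thesis by (auto simp: MS_def R)
    next
      assume "M \<in> insert ?n ` MS xs (r - 1)"
      then obtain M' where M': "M = insert ?n M'" "M' \<subseteq> returns xs" "r - 1 \<le> card M'"
        by (auto simp: MS_def)
      have fM: "finite M'" using M' finite_returns finite_subset by blast
      have "?n \<notin> M'" using M' nR by auto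
      then have "card M = Suc (card M')" using M' fM by simp
      then show ?thesis using M' by (auto simp: MS_def R)
    qed
  qed
  have fin: "finite (MS xs r)" "finite (insert ?n ` MS xs (r - 1))" using finite_MS by auto
  have dis: "MS xs r \<inter> insert ?n ` MS xs (r - 1) = {}" using nR by (auto simp: MS_def)
  have inj: "inj_on (insert ?n) (MS xs (r - 1))"
    using nR unfolding inj_on_def MS_def by (metis (no_types, lifting) insert_ident mem_Collect_eq subsetD)
  have p1: "(\<Sum>M\<in>MS xs r. q ^ ew (xs @ [True]) M) = q ^ ?n * g q xs r"
  proof -
    have "(\<Sum>M\<in>MS xs r. q ^ ew (xs @ [True]) M) = (\<Sum>M\<in>MS xs r. q ^ (ew xs M + ?n))"
      using assms by (intro sum.cong) (auto simp: MS_def ew_def maj_T half_le_maj)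
    then show ?thesis by (simp add: g_def sum_distrib_left power_add mult.commute)
  qed
  have p2: "(\<Sum>M\<in>insert ?n ` MS xs (r - 1). q ^ ew (xs @ [True]) M) = q ^ (?n - ?n div 2) * g q xs (r - 1)"
  proof -
    have "(\<Sum>M\<in>insert ?n ` MS xs (r - 1). q ^ ew (xs @ [True]) M) = (\<Sum>M\<in>MS xs (r - 1). q ^ ew (xs @ [True]) (insert ?n M))"
      by (rule sum.reindex[OF inj, unfolded comp_def])
    also have "\<dots> = (\<Sum>M\<in>MS xs (r - 1). q ^ (ew xs M + (?n - ?n div 2)))"
    proof (intro sum.cong refl)
      fix M assume M: "M \<in> MS xs (r - 1)"
      then have Ms: "M \<subseteq> returns xs" by (simp add: MS_def)
      have fM: "finite M" using Ms finite_returns finite_subset by blast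
      have nM: "?n \<notin> M" using Ms nR by auto
      have le: "(\<Sum>x\<in>M. x div 2) \<le> maj xs" using half_le_maj[OF Ms] .
      have "ew (xs @ [True]) (insert ?n M) = maj xs + ?n - ((\<Sum>x\<in>M. x div 2) + ?n div 2)"
        using assms fM nM by (simp add: ew_def maj_T)
      also have "\<dots> = ew xs M + (?n - ?n div 2)" using le by (simp add: ew_def)
      finally show "q ^ ew (xs @ [True]) (insert ?n M) = q ^ (ew xs M + (?n - ?n div 2))" by simp
    qed
    also have "\<dots> = q ^ (?n - ?n div 2) * g q xs (r - 1)"
      unfolding g_def sum_distrib_left by (rule sum.cong[OF refl]) (simp only: power_add mult.commute)
    finally show ?thesis .
  qed
  have "g q (xs @ [True]) r = (\<Sum>M\<in>MS xs r. q ^ ew (xs @ [True]) M) + (\<Sum>M\<in>insert ?n ` MS xs (r - 1). q ^ ew (xs @ [True]) M)"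
    unfolding g_def S by (rule sum.union_disjoint[OF fin dis])
  with p1 p2 show ?thesis by simp
qed



lemma BP_nil: "0 < s + t \<Longrightarrow> [] \<notin> BP s t"
  by (auto simp: BP_def ballot_path_def)

lemma BP_empty: "s < t \<Longrightarrow> BP s t = {}"
  by (auto simp: BP_def dest: ballot_counts) (metis ballot_path_def le_refl less_le_not_le order_less_imp_le
      diff_ge_0_iff_ge of_nat_le_iff)

lemma preT: "{xs. xs @ [True] \<in> BP (Suc s) t} = BP s t"
  by (auto simp: BP_def ballot_T)

lemma preT0: "{xs. xs @ [True] \<in> BP 0 t} = {}"
  by (auto simp: BP_def ballot_T0)

lemma preF: "{xs. xs @ [False] \<in> BP s (Suc t)} = (if t < s then BP s t else {})"
  by (auto simp: BP_def ballot_F)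

lemma preF0: "{xs. xs @ [False] \<in> BP s 0} = {}"
  by (auto simp: BP_def ballot_F0)

lemma FF_Suc: "FF q (Suc s) t r = (\<Sum>xs\<in>BP s t. g q (xs @ [True]) r) +
   (case t of 0 \<Rightarrow> 0 | Suc t' \<Rightarrow> if t' < Suc s then FF q (Suc s) t' r else 0)"
  unfolding FF_def
  by (subst sum_snoc[OF finite_BP BP_nil], simp, cases t) (simp_all add: preT preF preF0 g_F)

lemma FF_diag: "FF q (Suc u) (Suc u) r = FF q (Suc u) u r"
  unfolding FF_def
  by (subst sum_snoc[OF finite_BP BP_nil], simp) (simp add: preT preF g_F BP_empty)

lemma sumT: 
  assumes "0 < s + t"
  shows "(\<Sum>xs\<in>BP s t. g q (xs @ [True]) r) = FF q s t r +
     (\<Sum>ys\<in>{ys. ys @ [False] \<in> BP s t}. g q (ys @ [False, True]) r - g q ys r)"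
proof -
  let ?D = "\<lambda>xs. g q (xs @ [True]) r - g q xs r"
  have "(\<Sum>xs\<in>BP s t. g q (xs @ [True]) r) = FF q s t r + sum ?D (BP s t)"
    unfolding FF_def by (simp add: sum_subtractf)
  also have "sum ?D (BP s t) = (\<Sum>ys\<in>{ys. ys @ [True] \<in> BP s t}. ?D (ys @ [True])) + (\<Sum>ys\<in>{ys. ys @ [False] \<in> BP s t}. ?D (ys @ [False]))"
    by (rule sum_snoc[OF finite_BP BP_nil[OF assms]])
  also have "(\<Sum>ys\<in>{ys. ys @ [True] \<in> BP s t}. ?D (ys @ [True])) = 0"
  proof (rule sum.neutral, rule ballI)
    fix ys
    have "\<not> nv (ys @ [True])" by (simp add: nv_def)
    from g_T1[OF this] show "?D (ys @ [True]) = 0" by simp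
  qed
  finally show ?thesis by (simp add: g_F)
qed

lemma nvF: "nv (ys @ [False])" by (simp add: nv_def)

lemma FA:
  assumes "Suc t < s"
  shows "FF q (Suc s) (Suc t) r = FF q s (Suc t) r + (q ^ (s + Suc t) - 1) * FF q s t r + FF q (Suc s) t r"
proof -
  have "(\<Sum>ys\<in>{ys. ys @ [False] \<in> BP s (Suc t)}. g q (ys @ [False, True]) r - g q ys r)
      = (q ^ (s + Suc t) - 1) * FF q s t r"
  proof -
    have "t < s" using assms by simp
    then have e: "{ys. ys @ [False] \<in> BP s (Suc t)} = BP s t" by (simp add: preF)
    show ?thesis unfolding e FF_def sum_distrib_left
    proof (rule sum.cong[OF refl])
      fix ys assume "ys \<in> BP s t"
      then have b: "ballot_path s t ys" by (simp add: BP_def)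
      then have l: "length ys = s + t" and h: "path_height ys (length ys) = int s - int t"
        by (auto simp: ballot_path_def)
      have h2: "path_height (ys @ [False]) (length (ys @ [False])) \<noteq> 0"
        using ph_snoc[of ys False] h assms by simp
      have "g q ((ys @ [False]) @ [True]) r = q ^ length (ys @ [False]) * g q (ys @ [False]) r"
        by (rule g_T2[OF nvF h2])
      then show "g q (ys @ [False, True]) r - g q ys r = (q ^ (s + Suc t) - 1) * g q ys r"
        using l by (simp add: g_F algebra_simps)
    qed
  qed
  then show ?thesis
    using FF_Suc[of q s "Suc t" r] sumT[of s "Suc t" q r] assms
    by (simp add: algebra_simps)
qed

lemma FB: "FF q (Suc (Suc u)) (Suc u) r = q ^ (2 * Suc u) * FF q (Suc u) u r + q ^ Suc u * FF q (Suc u) u (r - 1) + FF q (Suc (Suc u)) u r"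
proof -
  have "(\<Sum>ys\<in>{ys. ys @ [False] \<in> BP (Suc u) (Suc u)}. g q (ys @ [False, True]) r - g q ys r)
      = (q ^ (2 * Suc u) - 1) * FF q (Suc u) u r + q ^ Suc u * FF q (Suc u) u (r - 1)"
  proof -
    have e: "{ys. ys @ [False] \<in> BP (Suc u) (Suc u)} = BP (Suc u) u" by (simp add: preF)
    show ?thesis unfolding e FF_def sum_distrib_left sum.distrib[symmetric]
    proof (rule sum.cong[OF refl])
      fix ys assume "ys \<in> BP (Suc u) u"
      then have b: "ballot_path (Suc u) u ys" by (simp add: BP_def)
      then have l: "length ys = Suc u + u" and h: "path_height ys (length ys) = int (Suc u) - int u"
        by (auto simp: ballot_path_def)
      have h2: "path_height (ys @ [False]) (length (ys @ [False])) = 0"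
        using ph_snoc[of ys False] h by simp
      have "g q ((ys @ [False]) @ [True]) r = q ^ length (ys @ [False]) * g q (ys @ [False]) r
           + q ^ (length (ys @ [False]) - length (ys @ [False]) div 2) * g q (ys @ [False]) (r - 1)"
        by (rule g_T3[OF nvF h2])
      moreover have "length (ys @ [False]) = 2 * Suc u" using l by simp
      moreover have "2 * Suc u - 2 * Suc u div 2 = Suc u" by simp
      ultimately show "g q (ys @ [False, True]) r - g q ys r = (q ^ (2 * Suc u) - 1) * g q ys r + q ^ Suc u * g q ys (r - 1)"
        by (simp add: g_F algebra_simps)
    qed
  qed
  then show ?thesis
    using FF_Suc[of q "Suc u" "Suc u" r] sumT[of "Suc u" "Suc u" q r] FF_diag[of q u r]
    by (simp add: algebra_simps)
qed

lemma g_single: "g q [True] r = (if r = 0 then 1 else 0)"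
proof -
  have v: "valleys [True] = {}" by (auto simp: valleys_def)
  then have "returns [True] = {}" by (simp add: returns_def)
  then have "MS [True] r = (if r = 0 then {{}} else {})" by (auto simp: MS_def)
  then show ?thesis by (simp add: g_def ew_def maj_def v)
qed

lemma F0: "FF q (Suc s) 0 r = (if s = 0 then (if r = 0 then 1 else 0) else FF q s 0 r)"
proof (cases s)
  case 0
  have "BP 0 0 = {[]}" by (auto simp: BP_def ballot_00)
  then show ?thesis using FF_Suc[of q 0 0 r] 0 by (simp add: g_single)
next
  case (Suc s')
  then show ?thesis using FF_Suc[of q s 0 r] sumT[of s 0 q r] by (simp add: preF0)
qed

lemma mainFF:
  fixes q :: complex
  assumes h: "\<forall>n>0. q ^ n \<noteq> 1"
  shows "t < s \<Longrightarrow> FF q s t r = Cf q s t r"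
proof (induction "s + t" arbitrary: s t r rule: less_induct)
  case less
  then obtain s' where s: "s = Suc s'" by (cases s) auto
  show ?case
  proof (cases t)
    case 0
    show ?thesis
    proof (cases "s' = 0")
      case True then show ?thesis using F0[of q s' r] recT0[OF h] s 0 by simp
    next
      case False
      then have "FF q s' 0 r = Cf q s' 0 r" using less.hyps[of s' 0 r] s 0 by simp
      then show ?thesis using F0[of q s' r] recT0[OF h] s 0 False by simp
    qed
  next
    case (Suc t')
    show ?thesis
    proof (cases "Suc t' < s'")
      case True
      have i1: "FF q s' (Suc t') r = Cf q s' (Suc t') r" using less.hyps[of s' "Suc t'" r] True s Suc by simp
      have i2: "FF q s' t' r = Cf q s' t' r" using less.hyps[of s' t' r] True s Suc by simp
      have i3: "FF q (Suc s') t' r = Cf q (Suc s') t' r" using less.hyps[of "Suc s'" t' r] True s Suc by simp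
      show ?thesis unfolding s Suc FA[OF True] recA[OF h] i1 i2 i3 by (simp add: algebra_simps)
    next
      case False
      then have "s' = Suc t'" using less.prems s Suc by simp
      then obtain u where u: "s' = Suc u" "t = Suc u" using Suc by simp
      have i1: "FF q (Suc u) u r = Cf q (Suc u) u r" using less.hyps[of "Suc u" u r] s u by simp
      have i2: "FF q (Suc u) u (r - 1) = Cf q (Suc u) u (r - 1)" using less.hyps[of "Suc u" u "r - 1"] s u by simp
      have i3: "FF q (Suc (Suc u)) u r = Cf q (Suc (Suc u)) u r" using less.hyps[of "Suc (Suc u)" u r] s u by simp
      show ?thesis unfolding s u FB recB[OF h] i1 i2 i3 ..
    qed
  qed
qed

theorem lemma2p1:
  fixes s t r :: nat and q :: complex
  assumes "t < s"
    and "\<forall>n>0. q ^ n \<noteq> 1"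
  shows "(\<Sum>D\<in>marked_paths s t r. q powi vmr D) = q ^ ((r + 1) choose 2) * qbinom q (s + t) (s + r)"
  unfolding lhs_FF mainFF[OF assms(2) assms(1)] Cf_def ..

end
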